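(* Let $T \in \mathbb{R}^{n_1} \otimes \mathbb{R}^{n_2} \otimes \mathbb{R}^{n_3}$ be a real tensor. Then \[ Q(T) \geq \left\lfloor \sqrt{Q_{\mathbb{C}}(T)} \right\rfloor. \]
   Context: For $r \geq 0$ let $I_r := \sum_{j=1}^r e_j \otimes e_j \otimes e_j \in \mathbb{R}^r\otimes\mathbb{R}^r\otimes\mathbb{R}^r$ (the $r$-th unit tensor; $e_j$ the standard basis vectors). The (real) subrank of $T \in \mathbb{R}^{n_1} \otimes \mathbb{R}^{n_2} \otimes \mathbb{R}^{n_3}$ is $Q(T) := \max\{ r \mid \exists\ \mathbb{R}\text{-linear maps } \varphi_i : \mathbb{R}^{n_i} \to \mathbb{R}^r \text{ with } (\varphi_1 \otimes \varphi_2 \otimes \varphi_3) T = I_r\}$. The complex subrank $Q_{\mathbb{C}}(T)$ of the real tensor $T$ is defined in the same way but allowing $\mathbb{C}$-linear maps $\varphi_i : \mathbb{C}^{n_i} \to \mathbb{C}^r$ (with $T$ viewed in $\mathbb{C}^{n_1}\otimes\mathbb{C}^{n_2}\otimes\mathbb{C}^{n_3}$ and $I_r$ the complex unit tensor). *)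

theory Defs
  imports Complex_Main
begin

text \<open>A tensor in K^n1 (x) K^n2 (x) K^n3 is given by its coordinate array
  T i j k (only indices i < n1, j < n2, k < n3 matter).  A linear map
  K^ni -> K^r is given by its r x ni matrix.\<close>

definition restricts_to_unit ::
  "nat \<Rightarrow> nat \<Rightarrow> nat \<Rightarrow> (nat \<Rightarrow> nat \<Rightarrow> nat \<Rightarrow> 'a::field) \<Rightarrow> nat \<Rightarrow> bool" where
  "restricts_to_unit n1 n2 n3 T r \<longleftrightarrow>
     (\<exists>A B C :: nat \<Rightarrow> nat \<Rightarrow> 'a.
        \<forall>a<r. \<forall>b<r. \<forall>c<r.
          (\<Sum>i<n1. \<Sum>j<n2. \<Sum>k<n3. A a i * B b j * C c k * T i j k)
            = (if a = b \<and> b = c then 1 else 0))"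

definition subrank ::
  "nat \<Rightarrow> nat \<Rightarrow> nat \<Rightarrow> (nat \<Rightarrow> nat \<Rightarrow> nat \<Rightarrow> 'a::field) \<Rightarrow> nat" where
  "subrank n1 n2 n3 T = Max {r. restricts_to_unit n1 n2 n3 T r}"

definition real_subrank ::
  "nat \<Rightarrow> nat \<Rightarrow> nat \<Rightarrow> (nat \<Rightarrow> nat \<Rightarrow> nat \<Rightarrow> real) \<Rightarrow> nat" where
  "real_subrank n1 n2 n3 T = subrank n1 n2 n3 T"

definition complex_subrank ::
  "nat \<Rightarrow> nat \<Rightarrow> nat \<Rightarrow> (nat \<Rightarrow> nat \<Rightarrow> nat \<Rightarrow> real) \<Rightarrow> nat" where
  "complex_subrank n1 n2 n3 T = subrank n1 n2 n3 (\<lambda>i j k. complex_of_real (T i j k))"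

end

theory Submission imports Defs "Jordan_Normal_Form.Determinant" "HOL-Computational_Algebra.Polynomial"
begin

definition tri :: "nat \<Rightarrow> nat \<Rightarrow> nat \<Rightarrow> (nat \<Rightarrow> nat \<Rightarrow> nat \<Rightarrow> 'a::comm_ring_1)
   \<Rightarrow> (nat \<Rightarrow> 'a) \<Rightarrow> (nat \<Rightarrow> 'a) \<Rightarrow> (nat \<Rightarrow> 'a) \<Rightarrow> 'a" where
  "tri n1 n2 n3 T x y z = (\<Sum>i<n1. \<Sum>j<n2. \<Sum>k<n3. x i * y j * z k * T i j k)"

lemma restricts_tri: "restricts_to_unit n1 n2 n3 T r \<longleftrightarrow>
  (\<exists>A B C. \<forall>a<r. \<forall>b<r. \<forall>c<r. tri n1 n2 n3 T (A a) (B b) (C c) = (if a = b \<and> b = c then 1 else 0))"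
  unfolding restricts_to_unit_def tri_def by simp

lemma tri_alt1: "tri n1 n2 n3 T x y z = (\<Sum>i<n1. x i * (\<Sum>j<n2. \<Sum>k<n3. y j * z k * T i j k))"
  unfolding tri_def by (simp add: sum_distrib_left mult.assoc)

lemma tri_alt2: "tri n1 n2 n3 T x y z = (\<Sum>j<n2. y j * (\<Sum>i<n1. \<Sum>k<n3. x i * z k * T i j k))"
  unfolding tri_def by (subst sum.swap) (simp add: sum_distrib_left algebra_simps)

lemma tri_alt3: "tri n1 n2 n3 T x y z = (\<Sum>k<n3. z k * (\<Sum>i<n1. \<Sum>j<n2. x i * y j * T i j k))"
proof -
  have "tri n1 n2 n3 T x y z = (\<Sum>i<n1. \<Sum>k<n3. \<Sum>j<n2. x i * y j * z k * T i j k)"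
    unfolding tri_def by (rule sum.cong[OF refl], rule sum.swap)
  also have "\<dots> = (\<Sum>k<n3. \<Sum>i<n1. \<Sum>j<n2. x i * y j * z k * T i j k)"
    by (rule sum.swap)
  finally show ?thesis by (simp add: sum_distrib_left algebra_simps)
qed

lemma tri_sum1: "finite S \<Longrightarrow> tri n1 n2 n3 T (\<lambda>i. \<Sum>a\<in>S. f a * x a i) y z = (\<Sum>a\<in>S. f a * tri n1 n2 n3 T (x a) y z)"
  unfolding tri_alt1 by (simp add: sum_distrib_left sum_distrib_right mult.assoc sum.swap[of _ S])

lemma tri_sum2: "finite S \<Longrightarrow> tri n1 n2 n3 T x (\<lambda>j. \<Sum>a\<in>S. y a j) z = (\<Sum>a\<in>S. tri n1 n2 n3 T x (y a) z)"
  unfolding tri_alt2 by (simp add: sum_distrib_left sum_distrib_right mult.assoc sum.swap[of _ S])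

lemma tri_sum3: "finite S \<Longrightarrow> tri n1 n2 n3 T x y (\<lambda>k. \<Sum>a\<in>S. z a k) = (\<Sum>a\<in>S. tri n1 n2 n3 T x y (z a))"
  unfolding tri_alt3 by (simp add: sum_distrib_left sum_distrib_right mult.assoc sum.swap[of _ S])

lemma poly_tri: "poly (tri n1 n2 n3 T x y z) t = tri n1 n2 n3 (\<lambda>i j k. poly (T i j k) t) (\<lambda>i. poly (x i) t) (\<lambda>j. poly (y j) t) (\<lambda>k. poly (z k) t)"
  unfolding tri_def by (simp add: poly_sum)

lemma Re_tri: "Re (tri n1 n2 n3 (\<lambda>i j k. complex_of_real (T i j k)) x (\<lambda>j. complex_of_real (y j)) (\<lambda>k. complex_of_real (z k)))
   = tri n1 n2 n3 T (\<lambda>i. Re (x i)) y z"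
  unfolding tri_def by (simp add: Re_sum)


lemma sum_if_less: "(n1::nat) \<le> r \<Longrightarrow> (\<Sum>i<r. if i < n1 then f i else 0) = (\<Sum>i<n1. f i)"
proof -
  assume "n1 \<le> r"
  have "(\<Sum>i<r. if i < n1 then f i else 0) = (\<Sum>i\<in>{..<n1}. if i < n1 then f i else 0)"
    using \<open>n1 \<le> r\<close> by (intro sum.mono_neutral_right) auto
  then show ?thesis by simp
qed

lemma restricts_bound:
  fixes T :: "nat \<Rightarrow> nat \<Rightarrow> nat \<Rightarrow> 'a::field"
  assumes "restricts_to_unit n1 n2 n3 T r" shows "r \<le> n1"
proof (rule ccontr)
  assume "\<not> r \<le> n1" hence lt: "n1 < r" by simp
  from assms obtain A B C where H: "\<forall>a<r. \<forall>b<r. \<forall>c<r. tri n1 n2 n3 T (A a) (B b) (C c) = (if a = b \<and> b = c then 1 else 0)"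
    unfolding restricts_tri by blast
  define A' where "A' = mat r r (\<lambda>(a,i). if i < n1 then A a i else 0)"
  define N' where "N' = mat r r (\<lambda>(i,b). if i < n1 then (\<Sum>c<r. \<Sum>j<n2. \<Sum>k<n3. B b j * C c k * T i j k) else 0)"
  have A'c: "A' \<in> carrier_mat r r" and N'c: "N' \<in> carrier_mat r r" by (auto simp: A'_def N'_def)
  have "A' * N' = 1\<^sub>m r"
  proof (rule eq_matI)
    fix a b assume ab: "a < dim_row (1\<^sub>m r)" "b < dim_col (1\<^sub>m r)"
    hence ab': "a < r" "b < r" by auto
    have "(A' * N') $$ (a,b) = (\<Sum>i<r. A' $$ (a,i) * N' $$ (i,b))"
      using ab' by (simp add: A'_def N'_def scalar_prod_def lessThan_atLeast0)
    also have "\<dots> = (\<Sum>i<r. if i < n1 then A a i * (\<Sum>c<r. \<Sum>j<n2. \<Sum>k<n3. B b j * C c k * T i j k) else 0)"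
      using ab' by (intro sum.cong) (auto simp: A'_def N'_def)
    also have "\<dots> = (\<Sum>i<n1. A a i * (\<Sum>c<r. \<Sum>j<n2. \<Sum>k<n3. B b j * C c k * T i j k))"
      using lt by (intro sum_if_less) simp
    also have "\<dots> = (\<Sum>c<r. tri n1 n2 n3 T (A a) (B b) (C c))"
      unfolding tri_alt1 sum_distrib_left by (rule sum.swap)
    also have "\<dots> = (\<Sum>c<r. if a = b \<and> b = c then 1 else 0)"
      using H ab' by (intro sum.cong) auto
    also have "\<dots> = 1\<^sub>m r $$ (a,b)" using ab' by auto
    finally show "(A' * N') $$ (a,b) = 1\<^sub>m r $$ (a,b)" .
  qed (auto simp: A'_def N'_def)
  hence NA: "N' * A' = 1\<^sub>m r" using mat_mult_left_right_inverse[OF A'c N'c] by simp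
  have "(N' * A') $$ (n1,n1) = 0"
    using lt by (simp add: A'_def N'_def scalar_prod_def)
  with NA lt show False by simp
qed


lemma divmod_eq: assumes h: "w < (s::nat)" "w' < s" shows "(v*s+w' = v'*s+w) \<longleftrightarrow> (v = v' \<and> w = w')"
proof
  assume h3: "v*s+w' = v'*s+w"
  have "(v*s+w') div s = v" "(v*s+w') mod s = w'" using h by auto
  moreover have "(v'*s+w) div s = v'" "(v'*s+w) mod s = w" using h by auto
  ultimately show "v = v' \<and> w = w'" using h3 by metis
qed auto

lemma idx_lt: assumes "v < (s::nat)" "w < s" shows "v*s+w < s*s"
proof -
  have "v*s+w < v*s+s" using assms by simp
  also have "\<dots> = (v+1)*s" by simp
  also have "\<dots> \<le> s*s" using assms by (intro mult_right_mono) auto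
  finally show ?thesis .
qed

lemma complex_poly_eval: "poly [:complex_of_real (Re c), complex_of_real (Im c):] \<i> = c"
  by (simp add: complex_eq_iff)

lemma main_constr:
  fixes T :: "nat \<Rightarrow> nat \<Rightarrow> nat \<Rightarrow> real"
  assumes R: "restricts_to_unit n1 n2 n3 (\<lambda>i j k. complex_of_real (T i j k)) r" and sr: "s*s \<le> r"
  shows "restricts_to_unit n1 n2 n3 T s"
proof -
  define TC where "TC = (\<lambda>i j k. complex_of_real (T i j k))"
  from R obtain A B C where H: "\<forall>a<r. \<forall>b<r. \<forall>c<r. tri n1 n2 n3 TC (A a) (B b) (C c) = (if a = b \<and> b = c then 1 else 0)"
    unfolding restricts_tri TC_def by blast
  define m where "m = s*s"
  define y where "y v j = (\<Sum>w<s. B (v*s+w) j)" for v j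
  define z where "z w k = (\<Sum>v<s. C (v*s+w) k)" for w k
  define yp where "yp v j = [:complex_of_real (Re (y v j)), complex_of_real (Im (y v j)):]" for v j
  define zp where "zp w k = [:complex_of_real (Re (z w k)), complex_of_real (Im (z w k)):]" for w k
  define Np where "Np = mat m m (\<lambda>(p,a). tri n1 n2 n3 (\<lambda>i j k. [:TC i j k:]) (\<lambda>i. [:A a i:]) (yp (p div s)) (zp (p mod s)))"
  define Nt where "Nt \<tau> = mat m m (\<lambda>(p,a). tri n1 n2 n3 TC (A a) (\<lambda>j. poly (yp (p div s) j) \<tau>) (\<lambda>k. poly (zp (p mod s) k) \<tau>))" for \<tau>
  have Ntc: "Nt \<tau> \<in> carrier_mat m m" for \<tau> by (simp add: Nt_def)
  have eval: "map_mat (\<lambda>q. poly q \<tau>) Np = Nt \<tau>" for \<tau>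
    by (rule eq_matI) (auto simp: Np_def Nt_def poly_tri)
  have hom: "comm_ring_hom (\<lambda>q. poly q \<tau>)" for \<tau> :: complex
    by unfold_locales auto
  have detN: "det (Nt \<tau>) = poly (det Np) \<tau>" for \<tau>
    using comm_ring_hom.hom_det[OF hom, of \<tau> Np] eval by simp
  have key: "tri n1 n2 n3 TC (A a) (y v) (z w) = (if a = v*s+w then 1 else 0)" if a: "a < m" "v < s" "w < s" for a v w
  proof -
    have "tri n1 n2 n3 TC (A a) (y v) (z w) = (\<Sum>w'<s. \<Sum>v'<s. tri n1 n2 n3 TC (A a) (B (v*s+w')) (C (v'*s+w)))"
      unfolding y_def z_def by (simp add: tri_sum2 tri_sum3)
    also have "\<dots> = (\<Sum>w'<s. \<Sum>v'<s. if w' = w \<and> v' = v \<and> a = v*s+w then 1 else 0)"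
    proof (intro sum.cong refl)
      fix w' v' assume "w' \<in> {..<s}" "v' \<in> {..<s}"
      hence lt: "w' < s" "v' < s" by auto
      have "v*s+w' < m" "v'*s+w < m" using lt a unfolding m_def by (auto intro: idx_lt)
      hence "v*s+w' < r" "v'*s+w < r" using sr m_def by auto
      moreover have "a < r" using a sr m_def by auto
      ultimately show "tri n1 n2 n3 TC (A a) (B (v*s+w')) (C (v'*s+w)) = (if w' = w \<and> v' = v \<and> a = v*s+w then 1 else 0)"
        using H divmod_eq[OF a(3) lt(1), of v v'] by auto
    qed
    also have "\<dots> = (\<Sum>w'<s. if w' = w \<and> a = v*s+w then 1 else 0)"
    proof (intro sum.cong refl)
      fix w' show "(\<Sum>v'<s. if w' = w \<and> v' = v \<and> a = v*s+w then (1::complex) else 0) = (if w' = w \<and> a = v*s+w then 1 else 0)"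
        using a by (cases "w' = w \<and> a = v*s+w") auto
    qed
    also have "\<dots> = (if a = v*s+w then 1 else 0)" using a by (cases "a = v*s+w") auto
    finally show ?thesis .
  qed
  have yi: "(\<lambda>j. poly (yp v j) \<i>) = y v" for v by (rule ext) (simp add: yp_def complex_eq_iff)
  have zi: "(\<lambda>k. poly (zp w k) \<i>) = z w" for w by (rule ext) (simp add: zp_def complex_eq_iff)
  have "Nt \<i> = 1\<^sub>m m"
  proof (rule eq_matI)
    fix p a assume pa: "p < dim_row (1\<^sub>m m)" "a < dim_col (1\<^sub>m m)"
    hence pa': "p < m" "a < m" by auto
    hence s0: "s > 0" unfolding m_def by (cases s) auto
    have "p div s < s" using pa' unfolding m_def by (simp add: less_mult_imp_div_less)
    moreover have "p mod s < s" using s0 by simp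
    ultimately have "Nt \<i> $$ (p,a) = (if a = (p div s)*s + p mod s then 1 else 0)"
      using pa' key[of a "p div s" "p mod s"] by (simp add: Nt_def yi zi)
    also have "\<dots> = 1\<^sub>m m $$ (p,a)" using pa' by auto
    finally show "Nt \<i> $$ (p,a) = 1\<^sub>m m $$ (p,a)" .
  qed (auto simp: Nt_def)
  hence "poly (det Np) \<i> = 1" using detN[of \<i>] by simp
  hence Dnz: "det Np \<noteq> 0" by auto
  have "\<exists>t::real. poly (det Np) (complex_of_real t) \<noteq> 0"
  proof (rule ccontr)
    assume "\<not> ?thesis"
    hence "range complex_of_real \<subseteq> {x. poly (det Np) x = 0}" by auto
    hence "finite (range complex_of_real)" using poly_roots_finite[OF Dnz] finite_subset by blast
    moreover have "inj complex_of_real" by (simp add: inj_def)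
    ultimately have "finite (UNIV :: real set)" using finite_imageD by blast
    thus False using infinite_UNIV_char_0 by blast
  qed
  then obtain t :: real where t: "poly (det Np) (complex_of_real t) \<noteq> 0" by blast
  define N where "N = Nt (complex_of_real t)"
  have Nc: "N \<in> carrier_mat m m" by (simp add: N_def Ntc)
  have "det N \<noteq> 0" using t detN by (simp add: N_def)
  from det_non_zero_imp_unit[OF Nc this, of undefined]
  obtain Ninv where Ninvc: "Ninv \<in> carrier_mat m m" and NN: "N * Ninv = 1\<^sub>m m"
    unfolding Units_def ring_mat_def by auto
  define X where "X u i = (\<Sum>a<m. Ninv $$ (a, u*s+u) * A a i)" for u i
  define Yr where "Yr v j = Re (y v j) + t * Im (y v j)" for v j
  define Zr where "Zr w k = Re (z w k) + t * Im (z w k)" for w k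
  have Yt: "poly (yp v j) (complex_of_real t) = complex_of_real (Yr v j)" for v j
    by (simp add: yp_def Yr_def)
  have Zt: "poly (zp w k) (complex_of_real t) = complex_of_real (Zr w k)" for w k
    by (simp add: zp_def Zr_def)
  show ?thesis unfolding restricts_tri
  proof (intro exI allI impI)
    fix u v w assume uvw: "u < s" "v < s" "w < s"
    have vw: "v*s+w < m" "u*s+u < m" using uvw unfolding m_def by (auto intro: idx_lt)
    have s0: "s > 0" using uvw by auto
    have "tri n1 n2 n3 TC (X u) (\<lambda>j. complex_of_real (Yr v j)) (\<lambda>k. complex_of_real (Zr w k))
        = (\<Sum>a<m. Ninv $$ (a, u*s+u) * tri n1 n2 n3 TC (A a) (\<lambda>j. complex_of_real (Yr v j)) (\<lambda>k. complex_of_real (Zr w k)))"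
      unfolding X_def by (simp add: tri_sum1)
    also have "\<dots> = (\<Sum>a<m. N $$ (v*s+w, a) * Ninv $$ (a, u*s+u))"
    proof (intro sum.cong refl)
      fix a assume "a \<in> {..<m}"
      thus "Ninv $$ (a, u*s+u) * tri n1 n2 n3 TC (A a) (\<lambda>j. complex_of_real (Yr v j)) (\<lambda>k. complex_of_real (Zr w k))
          = N $$ (v*s+w, a) * Ninv $$ (a, u*s+u)"
        using vw uvw s0 by (simp add: N_def Nt_def Yt Zt)
    qed
    also have "\<dots> = (N * Ninv) $$ (v*s+w, u*s+u)"
      using vw Nc Ninvc by (simp add: scalar_prod_def lessThan_atLeast0)
    also have "\<dots> = (if v*s+w = u*s+u then 1 else 0)" using NN vw by simp
    also have "\<dots> = (if u = v \<and> v = w then 1 else 0)" using divmod_eq[OF uvw(1) uvw(3), of v u] by auto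
    finally have E: "tri n1 n2 n3 TC (X u) (\<lambda>j. complex_of_real (Yr v j)) (\<lambda>k. complex_of_real (Zr w k)) = (if u = v \<and> v = w then 1 else 0)" .
    have "tri n1 n2 n3 T (\<lambda>i. Re (X u i)) (Yr v) (Zr w) = Re (tri n1 n2 n3 TC (X u) (\<lambda>j. complex_of_real (Yr v j)) (\<lambda>k. complex_of_real (Zr w k)))"
      unfolding TC_def by (simp add: Re_tri)
    thus "tri n1 n2 n3 T ((\<lambda>u i. Re (X u i)) u) (Yr v) (Zr w) = (if u = v \<and> v = w then 1 else 0)"
      using E by simp
  qed
qed


lemma subrank_facts:
  fixes T :: "nat \<Rightarrow> nat \<Rightarrow> nat \<Rightarrow> 'a::field"
  shows "restricts_to_unit n1 n2 n3 T (subrank n1 n2 n3 T)"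
    and "restricts_to_unit n1 n2 n3 T r \<Longrightarrow> r \<le> subrank n1 n2 n3 T"
proof -
  let ?S = "{r. restricts_to_unit n1 n2 n3 T r}"
  have fin: "finite ?S" by (rule finite_subset[of _ "{..n1}"]) (auto dest: restricts_bound)
  have "0 \<in> ?S" by (simp add: restricts_to_unit_def)
  hence "Max ?S \<in> ?S" using fin by (intro Max_in) auto
  thus "restricts_to_unit n1 n2 n3 T (subrank n1 n2 n3 T)" by (simp add: subrank_def)
  show "restricts_to_unit n1 n2 n3 T r \<Longrightarrow> r \<le> subrank n1 n2 n3 T"
    unfolding subrank_def using fin by (intro Max_ge) auto
qed

theorem theorem2p2:
  fixes n1 n2 n3 :: nat and T :: "nat \<Rightarrow> nat \<Rightarrow> nat \<Rightarrow> real"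
  shows "int (real_subrank n1 n2 n3 T) \<ge> \<lfloor>sqrt (real (complex_subrank n1 n2 n3 T))\<rfloor>"
proof -
  define rC where "rC = complex_subrank n1 n2 n3 T"
  have RC: "restricts_to_unit n1 n2 n3 (\<lambda>i j k. complex_of_real (T i j k)) rC"
    unfolding rC_def complex_subrank_def by (rule subrank_facts(1))
  define s where "s = nat \<lfloor>sqrt (real rC)\<rfloor>"
  have fl: "\<lfloor>sqrt (real rC)\<rfloor> = int s" unfolding s_def by simp
  have "real s \<le> sqrt (real rC)" using fl by (metis of_int_floor_le of_int_of_nat_eq)
  hence "real s * real s \<le> sqrt (real rC) * sqrt (real rC)" by (intro mult_mono) auto
  hence "real (s*s) \<le> real rC" by simp
  hence ss: "s*s \<le> rC" by linarith
  have "restricts_to_unit n1 n2 n3 T s" by (rule main_constr[OF RC ss])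
  hence "s \<le> real_subrank n1 n2 n3 T" unfolding real_subrank_def by (rule subrank_facts(2))
  thus ?thesis using fl unfolding rC_def by simp
qed

end
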